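(* Let $\mathcal{L}=(L,\wedge,\vee,0,1)$ be a complete lattice and let $p\in L$ be strongly irreducible in $L$. Then $p$ is irreducible in $L$, and at least one of the following holds: (i) there exists $p'\in L$ with $p'<p$ and an element $q\in L$ with $q\geq p'$ such that $p$ is a pseudo-complement of $q$ in the lattice $\{x\in L\mid p'\leq x\}$ and the interval $[p',q]$ is uniform; (ii) $p$ is a waist in $L$.
   Context: For a lower semilattice $(L,\wedge)$, an element $p$ is irreducible if for all $a,b\in L$ with $p\leq a$ and $p\leq b$: $a\wedge b\leq p$ implies $a\leq p$ or $b\leq p$; it is strongly irreducible if this implication holds for all $a,b\in L$. For $a\leq b$, $[a,b]=\{x\in L\mid a\leq x\leq b\}$. A lower semilattice with least element $z$ is uniform if $z$ is irreducible in it, i.e. $x\wedge y=z$ implies $x=z$ or $y=z$. A pseudo-complement of an element $a$ in a semilattice with least element $z$ is the greatest element $x$ with $a\wedge x=z$. A waist is an element comparable to every element of $L$. *)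

theory Defs
  imports Main
begin

definition irreducible_in :: "'a::semilattice_inf set \<Rightarrow> 'a \<Rightarrow> bool" where
  "irreducible_in S p \<longleftrightarrow>
     (\<forall>a\<in>S. \<forall>b\<in>S. p \<le> a \<longrightarrow> p \<le> b \<longrightarrow> inf a b \<le> p \<longrightarrow> a \<le> p \<or> b \<le> p)"

definition strongly_irreducible_in :: "'a::semilattice_inf set \<Rightarrow> 'a \<Rightarrow> bool" where
  "strongly_irreducible_in S p \<longleftrightarrow>
     (\<forall>a\<in>S. \<forall>b\<in>S. inf a b \<le> p \<longrightarrow> a \<le> p \<or> b \<le> p)"

definition uniform_with_least :: "'a::semilattice_inf set \<Rightarrow> 'a \<Rightarrow> bool" where
  "uniform_with_least S z \<longleftrightarrow> z \<in> S \<and> (\<forall>x\<in>S. z \<le> x) \<and> irreducible_in S z"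

definition pseudo_complement_in :: "'a::semilattice_inf set \<Rightarrow> 'a \<Rightarrow> 'a \<Rightarrow> 'a \<Rightarrow> bool" where
  "pseudo_complement_in S z a x \<longleftrightarrow>
     x \<in> S \<and> inf a x = z \<and> (\<forall>y\<in>S. inf a y = z \<longrightarrow> y \<le> x)"

definition waist :: "'a::order \<Rightarrow> bool" where
  "waist p \<longleftrightarrow> (\<forall>x. x \<le> p \<or> p \<le> x)"

end

theory Submission
  imports Defs
begin

theorem theorem1p16:
  fixes p :: "'a::complete_lattice"
  assumes "strongly_irreducible_in UNIV p"
  shows "irreducible_in UNIV p \<and>
    ((\<exists>p' q. p' < p \<and> p' \<le> q \<and> pseudo_complement_in {p'..} p' q p \<and>
        uniform_with_least {p'..q} p')
     \<or> waist p)"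
proof -
  have si: "\<And>a b. inf a b \<le> p \<Longrightarrow> a \<le> p \<or> b \<le> p"
    using assms unfolding strongly_irreducible_in_def by blast
  have irr: "irreducible_in UNIV p"
    unfolding irreducible_in_def using si by blast
  show ?thesis
  proof (cases "waist p")
    case True
    then show ?thesis using irr by blast
  next
    case False
    then obtain x where x1: "\<not> x \<le> p" and x2: "\<not> p \<le> x"
      unfolding waist_def by blast
    define p' where "p' = inf p x"
    have a: "p' < p" using x2 unfolding p'_def
      by (metis inf.absorb_iff1 inf.cobounded1 order.not_eq_order_implies_strict)
    have b: "p' \<le> x" unfolding p'_def by simp
    have c: "pseudo_complement_in {p'..} p' x p"
      unfolding pseudo_complement_in_def
    proof (intro conjI ballI impI)
      show "p \<in> {p'..}" using a by simp
      show "inf x p = p'" unfolding p'_def by (simp add: inf_commute)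
    next
      fix y assume "y \<in> {p'..}" "inf x y = p'"
      then have "inf x y \<le> p" unfolding p'_def by simp
      then show "y \<le> p" using si x1 by blast
    qed
    have d: "uniform_with_least {p'..x} p'"
      unfolding uniform_with_least_def irreducible_in_def
    proof (intro conjI ballI impI)
      show "p' \<in> {p'..x}" using b by simp
    next
      fix y assume "y \<in> {p'..x}" then show "p' \<le> y" by simp
    next
      fix u v assume u: "u \<in> {p'..x}" and v: "v \<in> {p'..x}" and "inf u v \<le> p'"
      then have "inf u v \<le> p" unfolding p'_def by (meson inf.boundedE)
      then have "u \<le> p \<or> v \<le> p" using si by blast
      then show "u \<le> p' \<or> v \<le> p'" using u v unfolding p'_def by auto
    qed
    show ?thesis using irr a b c d by blast
  qed
qed

end
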